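(* Let $*$ be a rank-one preserving product on the space $M_{n\times m}(\mathbb{C})$ of $n\times m$ complex matrices, and write its identity element as $e f^*$ with $e\in\mathbb{C}^n$, $f\in\mathbb{C}^m$. Then for all $v\in\mathbb{C}^n$ and $w\in\mathbb{C}^m$, $$ v f^* * e w^* \;=\; e w^* * v f^* \;=\; v w^*. $$
   Context: A rank-one preserving product (ropp) on $M_{n\times m}(\mathbb{C})$ is an associative bilinear product $*$ on $M_{n\times m}(\mathbb{C})$ which has an identity element of rank one and such that the $*$-product of any two rank-one matrices has rank at most one. Here $u^*$ denotes the conjugate transpose of a column vector $u$, so $vw^*$ is the $n\times m$ matrix $v\overline{w}^{T}$. *)

theory Defs
  imports "Jordan_Normal_Form.DL_Rank"
begin

text \<open>Matrices in M_{n x m}(C) are represented as complex matrices in carrier_mat n m.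
  The outer product v w^* (v in C^n, w in C^m) is the n x m matrix with entries v_i * cnj (w_j).\<close>

definition outer :: "complex vec \<Rightarrow> complex vec \<Rightarrow> complex mat" where
  "outer v w = mat (dim_vec v) (dim_vec w) (\<lambda>(i, j). v $ i * cnj (w $ j))"

definition crank :: "nat \<Rightarrow> complex mat \<Rightarrow> nat" where
  "crank n A = vec_space.rank n A"

definition cbilinear_on :: "nat \<Rightarrow> nat \<Rightarrow> (complex mat \<Rightarrow> complex mat \<Rightarrow> complex mat) \<Rightarrow> bool" where
  "cbilinear_on n m p \<longleftrightarrow>
     (\<forall>A \<in> carrier_mat n m. \<forall>B \<in> carrier_mat n m. p A B \<in> carrier_mat n m) \<and>
     (\<forall>A \<in> carrier_mat n m. \<forall>B \<in> carrier_mat n m. \<forall>C \<in> carrier_mat n m. \<forall>c :: complex.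
        p (A + B) C = p A C + p B C \<and> p A (B + C) = p A B + p A C \<and>
        p (c \<cdot>\<^sub>m A) B = c \<cdot>\<^sub>m p A B \<and> p A (c \<cdot>\<^sub>m B) = c \<cdot>\<^sub>m p A B)"

definition ropp :: "nat \<Rightarrow> nat \<Rightarrow> (complex mat \<Rightarrow> complex mat \<Rightarrow> complex mat) \<Rightarrow> bool" where
  "ropp n m p \<longleftrightarrow>
     cbilinear_on n m p \<and>
     (\<forall>A \<in> carrier_mat n m. \<forall>B \<in> carrier_mat n m. \<forall>C \<in> carrier_mat n m.
        p (p A B) C = p A (p B C)) \<and>
     (\<exists>E \<in> carrier_mat n m. crank n E = 1 \<and>
        (\<forall>A \<in> carrier_mat n m. p E A = A \<and> p A E = A)) \<and>
     (\<forall>A \<in> carrier_mat n m. \<forall>B \<in> carrier_mat n m.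
        crank n A = 1 \<longrightarrow> crank n B = 1 \<longrightarrow> crank n (p A B) \<le> 1)"

end

theory Submission
  imports Defs "Jordan_Normal_Form.DL_Rank_Submatrix"
begin



lemma outer_carrier[simp]: "x \<in> carrier_vec n \<Longrightarrow> y \<in> carrier_vec m \<Longrightarrow> outer x y \<in> carrier_mat n m"
  unfolding outer_def by auto

lemma outer_index[simp]: "i < dim_vec x \<Longrightarrow> j < dim_vec y \<Longrightarrow> outer x y $$ (i,j) = x$i * cnj (y$j)"
  unfolding outer_def by auto

lemma outer_dims[simp]: "dim_row (outer x y) = dim_vec x" "dim_col (outer x y) = dim_vec y"
  unfolding outer_def by auto

lemma outer_add_left: "dim_vec x = dim_vec x' \<Longrightarrow> outer (x + x') y = outer x y + outer x' y"
  by (rule eq_matI) (auto simp: algebra_simps)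

lemma outer_add_right: "dim_vec y = dim_vec y' \<Longrightarrow> outer x (y + y') = outer x y + outer x y'"
  by (rule eq_matI) (auto simp: algebra_simps)

lemma outer_smult_left: "outer (c \<cdot>\<^sub>v x) y = c \<cdot>\<^sub>m outer x y"
  by (rule eq_matI) (auto simp: algebra_simps)

lemma outer_smult_right: "outer x (c \<cdot>\<^sub>v y) = cnj c \<cdot>\<^sub>m outer x y"
  by (rule eq_matI) (auto simp: algebra_simps)

lemma crank_outer:
  assumes x: "x \<in> carrier_vec n" and y: "y \<in> carrier_vec m"
    and i: "i < n" "x$i \<noteq> 0" and j: "j < m" "y$j \<noteq> 0"
  shows "crank n (outer x y) = 1"
proof -
  have C: "outer x y \<in> carrier_mat n m" using x y by simp
  have le: "crank n (outer x y) \<le> 1" unfolding crank_def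
    by (rule vec_space.rank_le_1_product_entries[OF C, of "\<lambda>r. x$r" "\<lambda>c. cnj (y$c)"]) (use x y in auto)
  have ci: "{a. a < n \<and> a \<in> {i}} = {i}" "{a. a < m \<and> a \<in> {j}} = {j}" using i j by auto
  have S: "submatrix (outer x y) {i} {j} \<in> carrier_mat 1 1"
    unfolding submatrix_def using x y ci by simp
  have p0: "(LEAST a::nat. a = i) = i" "(LEAST a::nat. a = j) = j" by (auto intro: Least_equality)
  have "submatrix (outer x y) {i} {j} $$ (0,0) = outer x y $$ (i,j)"
    using submatrix_index[of 0 "outer x y" "{i}" 0 "{j}"] x y ci by (simp add: p0)
  also have "\<dots> = x$i * cnj (y$j)" using x y i j by simp
  finally have "det (submatrix (outer x y) {i} {j}) = x$i * cnj (y$j)"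
    using det_single[OF S] by simp
  then have "det (submatrix (outer x y) {i} {j}) \<noteq> 0" using i j by simp
  from vec_space.rank_gt_minor[OF C this] have "1 \<le> crank n (outer x y)"
    unfolding crank_def ci by simp
  with le show ?thesis by simp
qed

lemma minor_zero_ord:
  fixes A :: "complex mat"
  assumes A: "A \<in> carrier_mat n m" and r: "crank n A \<le> 1"
    and ik: "i < k" "k < n" and jl: "j < l" "l < m"
  shows "A$$(i,j) * A$$(k,l) = A$$(i,l) * A$$(k,j)"
proof (rule ccontr)
  assume ne: "A$$(i,j) * A$$(k,l) \<noteq> A$$(i,l) * A$$(k,j)"
  let ?S = "submatrix A {i,k} {j,l}"
  have ci: "{a. a < n \<and> a \<in> {i,k}} = {i,k}" "{a. a < m \<and> a \<in> {j,l}} = {j,l}" using ik jl by auto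
  have c2: "card {i,k} = 2" "card {j,l} = 2" using ik jl by auto
  have S: "?S \<in> carrier_mat 2 2" unfolding submatrix_def using A ci c2 by simp
  have p0: "pick {i,k} 0 = i" "pick {j,l} 0 = j" using ik jl by (auto intro!: Least_equality)
  have p1: "pick {i,k} (Suc 0) = k" "pick {j,l} (Suc 0) = l" using ik jl p0 by (auto intro!: Least_equality)
  have e: "?S $$ (a,b) = A $$ (pick {i,k} a, pick {j,l} b)" if "a < 2" "b < 2" for a b
    using submatrix_index[of a A "{i,k}" b "{j,l}"] A ci c2 that by simp
  have det: "det ?S \<noteq> 0"
  proof
    assume "det ?S = 0"
    then obtain v where v: "v \<in> carrier_vec 2" "v \<noteq> 0\<^sub>v 2" "?S *\<^sub>v v = 0\<^sub>v 2"
      using det_0_iff_vec_prod_zero_field[OF S] by auto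
    have row: "(?S *\<^sub>v v) $ a = ?S $$ (a,0) * v$0 + ?S $$ (a,1) * v$1" if "a < 2" for a
      using S v(1) that by (simp add: scalar_prod_def numeral_2_eq_2 row_def)
    have r0: "A$$(i,j) * v$0 + A$$(i,l) * v$1 = 0"
      using row[of 0] v(3) e[of 0 0] e[of 0 1] p0 p1 by simp
    have r1: "A$$(k,j) * v$0 + A$$(k,l) * v$1 = 0"
      using row[of 1] v(3) e[of 1 0] e[of 1 1] p0 p1 by simp
    have d0: "(A$$(i,j) * A$$(k,l) - A$$(i,l) * A$$(k,j)) * v$0 = 0"
      using r0 r1 by (Groebner_Basis.algebra)
    have d1: "(A$$(i,j) * A$$(k,l) - A$$(i,l) * A$$(k,j)) * v$1 = 0"
      using r0 r1 by (Groebner_Basis.algebra)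
    have "v$0 = 0" "v$1 = 0" using d0 d1 ne by auto
    then have "v = 0\<^sub>v 2" using v(1) by (intro eq_vecI) (auto simp: less_2_cases_iff)
    with v(2) show False by simp
  qed
  from vec_space.rank_gt_minor[OF A det] have "2 \<le> crank n A"
    unfolding crank_def ci c2 by simp
  with r show False by simp
qed

lemma minor_zero:
  fixes A :: "complex mat"
  assumes A: "A \<in> carrier_mat n m" and r: "crank n A \<le> 1"
    and ik: "i < n" "k < n" and jl: "j < m" "l < m"
  shows "A$$(i,j) * A$$(k,l) = A$$(i,l) * A$$(k,j)"
proof -
  have o: "\<And>i k j l. i < k \<Longrightarrow> k < n \<Longrightarrow> j < l \<Longrightarrow> l < m \<Longrightarrow> A$$(i,j) * A$$(k,l) = A$$(i,l) * A$$(k,j)"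
    by (rule minor_zero_ord[OF A r])
  show ?thesis
  proof (cases "i = k \<or> j = l")
    case True then show ?thesis by (auto simp: mult.commute)
  next
    case False
    then have "i < k \<or> k < i" "j < l \<or> l < j" by arith+
    then show ?thesis
    proof (elim disjE)
      assume "i < k" "j < l" then show ?thesis using o ik jl by blast
    next
      assume "i < k" "l < j" then show ?thesis using o[of i k l j] ik jl by simp
    next
      assume "k < i" "j < l" then show ?thesis using o[of k i j l] ik jl by (simp add: mult.commute)
    next
      assume "k < i" "l < j" then show ?thesis using o[of k i l j] ik jl by (simp add: mult.commute)
    qed
  qed
qed


lemma alg_A:
  fixes V0 V1 F0 Fc B0c B10 B00 B1c :: complex
  assumes h: "\<And>t. (V0*Fc + t*B0c)*(V1*F0 + t*B10) = (V0*F0 + t*B00)*(V1*Fc + t*B1c)"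
    and "V0 = 0" and "V1 \<noteq> 0"
  shows "B0c*F0 = B00*Fc"
proof -
  have "2 * V1 * (B0c*F0 - B00*Fc) = 0" using h[of 1] h[of "-1"] assms(2) by (Groebner_Basis.algebra)
  then show ?thesis using assms(3) by simp
qed
lemma alg_B:
  fixes E0 Eb W0 W1 B00 Bb1 B01 Bb0 :: complex
  assumes h: "\<And>t. (E0*W0 + t*B00)*(Eb*W1 + t*Bb1) = (E0*W1 + t*B01)*(Eb*W0 + t*Bb0)"
    and "W0 = 0" and "W1 \<noteq> 0"
  shows "Bb0*E0 = B00*Eb"
proof -
  have "2 * W1 * (Bb0*E0 - B00*Eb) = 0" using h[of 1] h[of "-1"] assms(2) by (Groebner_Basis.algebra)
  then show ?thesis using assms(3) by simp
qed
lemma alg_C: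
  fixes E0 F0 V0 W0 B00 Ei Fj Vi Wj Bij B0j Bi0 :: complex
  assumes h: "\<And>s. (E0*F0 + s*(V0*F0) + (E0*W0 + s*B00)) * (Ei*Fj + s*(Vi*Fj) + (Ei*Wj + s*Bij))
      = (E0*Fj + s*(V0*Fj) + (E0*Wj + s*B0j)) * (Ei*F0 + s*(Vi*F0) + (Ei*W0 + s*Bi0))"
    and "V0 = 0" "W0 = 0" "B0j*F0 = B00*Fj" "Bi0*E0 = B00*Ei"
  shows "E0*F0*Bij = E0*F0*(Vi*Wj) + B00*(Ei*Fj)"
proof -
  have "2 * (E0*F0*Bij - E0*F0*(Vi*Wj) - B00*(Ei*Fj)) = 0"
    using h[of 1] h[of "-1"] assms(2-5) by (Groebner_Basis.algebra)
  then have "E0*F0*Bij - E0*F0*(Vi*Wj) - B00*(Ei*Fj) = 0" by (simp only: mult_eq_0_iff) simp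
  then show ?thesis by (Groebner_Basis.algebra)
qed
lemma alg_D:
  fixes E0 F0 V1 W1 B00 B11 B01 B10 E1 F1 :: complex
  assumes "B00*B11 = B01*B10" "E0*F0*B11 = E0*F0*(V1*W1) + B00*(E1*F1)"
    "B01*F0 = B00*F1" "B10*E0 = B00*E1" "E0 \<noteq> 0" "F0 \<noteq> 0" "V1 \<noteq> 0" "W1 \<noteq> 0"
  shows "B00 = 0"
proof -
  have "E0*F0*B00*(V1*W1) = 0" using assms(1-4) by (Groebner_Basis.algebra)
  then show ?thesis using assms(5-8) by simp
qed


lemma core:
  fixes p :: "complex mat \<Rightarrow> complex mat \<Rightarrow> complex mat"
  assumes bil: "cbilinear_on n m p"
   and idl: "\<forall>A\<in>carrier_mat n m. p (outer e f) A = A \<and> p A (outer e f) = A"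
   and rk: "\<forall>A\<in>carrier_mat n m. \<forall>B\<in>carrier_mat n m. crank n A = 1 \<longrightarrow> crank n B = 1 \<longrightarrow> crank n (p A B) \<le> 1"
   and e: "e \<in> carrier_vec n" and f: "f \<in> carrier_vec m"
   and i0: "i0 < n" "e$i0 \<noteq> 0" and j0: "j0 < m" "f$j0 \<noteq> 0"
   and v: "v \<in> carrier_vec n" "v$i0 = 0" and w: "w \<in> carrier_vec m" "w$j0 = 0"
  shows "p (outer v f) (outer e w) = outer v w"
proof -
  have cl: "\<And>A B. A \<in> carrier_mat n m \<Longrightarrow> B \<in> carrier_mat n m \<Longrightarrow> p A B \<in> carrier_mat n m"
    using bil unfolding cbilinear_on_def by blast
  have addl: "\<And>A B C. A \<in> carrier_mat n m \<Longrightarrow> B \<in> carrier_mat n m \<Longrightarrow> C \<in> carrier_mat n m \<Longrightarrow> p (A + B) C = p A C + p B C"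
    using bil unfolding cbilinear_on_def by blast
  have addr: "\<And>A B C. A \<in> carrier_mat n m \<Longrightarrow> B \<in> carrier_mat n m \<Longrightarrow> C \<in> carrier_mat n m \<Longrightarrow> p A (B + C) = p A B + p A C"
    using bil unfolding cbilinear_on_def by blast
  have sml: "\<And>A B c. A \<in> carrier_mat n m \<Longrightarrow> B \<in> carrier_mat n m \<Longrightarrow> p (c \<cdot>\<^sub>m A) B = c \<cdot>\<^sub>m p A B"
    using bil unfolding cbilinear_on_def by blast
  have smr: "\<And>A B c. A \<in> carrier_mat n m \<Longrightarrow> B \<in> carrier_mat n m \<Longrightarrow> p A (c \<cdot>\<^sub>m B) = c \<cdot>\<^sub>m p A B"
    using bil unfolding cbilinear_on_def by blast
  have prk: "crank n (p (outer x y) (outer x' y')) \<le> 1"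
    if "x \<in> carrier_vec n" "y \<in> carrier_vec m" "x' \<in> carrier_vec n" "y' \<in> carrier_vec m"
       "a < n" "x$a \<noteq> 0" "b < m" "y$b \<noteq> 0" "a' < n" "x'$a' \<noteq> 0" "b' < m" "y'$b' \<noteq> 0"
    for x y x' y' a b a' b'
    using rk crank_outer[of x n y m a b] crank_outer[of x' n y' m a' b'] that by simp
  have dv[simp]: "dim_vec e = n" "dim_vec v = n" "dim_vec f = m" "dim_vec w = m"
    using e f v w by auto
  define B where "B = p (outer v f) (outer e w)"
  have BC: "B \<in> carrier_mat n m" unfolding B_def using cl v f e w by simp
  have Bd[simp]: "dim_row B = n" "dim_col B = m" using BC by auto
  show ?thesis
  proof (cases "(\<exists>i<n. v$i \<noteq> 0) \<and> (\<exists>j<m. w$j \<noteq> 0)")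
    case False
    then consider "\<forall>i<n. v$i = 0" | "\<forall>j<m. w$j = 0" by blast
    then show ?thesis
    proof cases
      case 1
      have z: "outer v f = 0 \<cdot>\<^sub>m outer v f" by (rule eq_matI) (use 1 in auto)
      have "B = 0 \<cdot>\<^sub>m B" unfolding B_def by (subst z) (simp add: sml v f e w)
      then have "B $$ (a,b) = 0" if "a < n" "b < m" for a b
        by (metis Bd index_smult_mat(1) mult_zero_left that)
      then show ?thesis unfolding B_def[symmetric] by (intro eq_matI) (auto simp: 1)
    next
      case 2
      have z: "outer e w = 0 \<cdot>\<^sub>m outer e w" by (rule eq_matI) (use 2 in auto)
      have "B = 0 \<cdot>\<^sub>m B" unfolding B_def by (subst z) (simp add: smr v f e w)
      then have "B $$ (a,b) = 0" if "a < n" "b < m" for a b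
        by (metis Bd index_smult_mat(1) mult_zero_left that)
      then show ?thesis unfolding B_def[symmetric] by (intro eq_matI) (auto simp: 2)
    qed
  next
    case True
    then obtain i1 j1 where i1: "i1 < n" "v$i1 \<noteq> 0" and j1: "j1 < m" "w$j1 \<noteq> 0" by blast
    have I: "p (outer e f) A = A" "p A (outer e f) = A" if "A \<in> carrier_mat n m" for A
      using idl that by auto
    have F2: "p (outer (e + s \<cdot>\<^sub>v v) f) (outer e w) = outer e w + s \<cdot>\<^sub>m B" for s
      by (simp add: outer_add_left outer_smult_left addl sml I B_def e f v w)
    have F3: "p (outer v f) (outer e (f + cnj t \<cdot>\<^sub>v w)) = outer v f + t \<cdot>\<^sub>m B" for t
      by (simp add: outer_add_right outer_smult_right addr smr I B_def e f v w)
    have F4: "p (outer (e + s \<cdot>\<^sub>v v) f) (outer e (f + w)) = outer e f + s \<cdot>\<^sub>m outer v f + (outer e w + s \<cdot>\<^sub>m B)" for s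
      by (simp add: outer_add_left outer_smult_left outer_add_right addl addr sml smr I B_def e f v w)
    have wj: "(f + cnj t \<cdot>\<^sub>v w) $ j0 = f $ j0" "(f + w) $ j0 = f $ j0" "(e + s \<cdot>\<^sub>v v) $ i0 = e $ i0" for t s
      using w v j0 i0 by auto
    have r3: "crank n (outer v f + t \<cdot>\<^sub>m B) \<le> 1" for t
      using prk[of v f e "f + cnj t \<cdot>\<^sub>v w" i1 j0 i0 j0] F3[of t] e f v w i0 j0 i1 wj by simp
    have r2: "crank n (outer e w + s \<cdot>\<^sub>m B) \<le> 1" for s
      using prk[of "e + s \<cdot>\<^sub>v v" f e w i0 j0 i0 j1] F2[of s] e f v w i0 j0 j1 wj by simp
    have r4: "crank n (outer e f + s \<cdot>\<^sub>m outer v f + (outer e w + s \<cdot>\<^sub>m B)) \<le> 1" for s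
      using prk[of "e + s \<cdot>\<^sub>v v" f e "f + w" i0 j0 i0 j0] F4[of s] e f v w i0 j0 wj by simp
    have r1: "crank n B \<le> 1"
      using prk[of v f e w i1 j0 i0 j1] e f v w i0 j0 i1 j1 unfolding B_def by simp
    have C3: "outer v f + t \<cdot>\<^sub>m B \<in> carrier_mat n m" for t using v f BC by auto
    have C2: "outer e w + t \<cdot>\<^sub>m B \<in> carrier_mat n m" for t using e w BC by auto
    have C4: "outer e f + s \<cdot>\<^sub>m outer v f + (outer e w + s \<cdot>\<^sub>m B) \<in> carrier_mat n m" for s
      using e f v w BC by auto
    have wz: "cnj (w$j0) = 0" using w by simp
    have stepA: "B$$(i0,c) * cnj (f$j0) = B$$(i0,j0) * cnj (f$c)" if c: "c < m" for c
    proof -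
      have h: "(v$i0 * cnj (f$c) + t * B$$(i0,c)) * (v$i1 * cnj (f$j0) + t * B$$(i1,j0))
             = (v$i0 * cnj (f$j0) + t * B$$(i0,j0)) * (v$i1 * cnj (f$c) + t * B$$(i1,c))" for t
        using minor_zero[OF C3 r3, of i0 i1 c j0 t] i0 i1 c j0 v f BC by simp
      show ?thesis by (rule alg_A[OF h v(2) i1(2)])
    qed
    have stepB: "B$$(b,j0) * e$i0 = B$$(i0,j0) * e$b" if b: "b < n" for b
    proof -
      have h: "(e$i0 * cnj (w$j0) + t * B$$(i0,j0)) * (e$b * cnj (w$j1) + t * B$$(b,j1))
             = (e$i0 * cnj (w$j1) + t * B$$(i0,j1)) * (e$b * cnj (w$j0) + t * B$$(b,j0))" for t
        using minor_zero[OF C2 r2, of i0 b j0 j1 t] i0 b j0 j1 e w BC by simp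
      show ?thesis by (rule alg_B[OF h wz]) (use j1 in simp)
    qed
    have stepC: "e$i0 * cnj (f$j0) * B$$(i,j) = e$i0 * cnj (f$j0) * (v$i * cnj (w$j)) + B$$(i0,j0) * (e$i * cnj (f$j))"
      if ij: "i < n" "j < m" for i j
    proof -
      have h: "(e$i0 * cnj (f$j0) + s * (v$i0 * cnj (f$j0)) + (e$i0 * cnj (w$j0) + s * B$$(i0,j0))) *
               (e$i * cnj (f$j) + s * (v$i * cnj (f$j)) + (e$i * cnj (w$j) + s * B$$(i,j)))
             = (e$i0 * cnj (f$j) + s * (v$i0 * cnj (f$j)) + (e$i0 * cnj (w$j) + s * B$$(i0,j))) *
               (e$i * cnj (f$j0) + s * (v$i * cnj (f$j0)) + (e$i * cnj (w$j0) + s * B$$(i,j0)))" for s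
        using minor_zero[OF C4 r4, of i0 i j0 j s] i0 ij j0 e f v w BC by simp
      show ?thesis by (rule alg_C[OF h v(2) wz stepA[OF ij(2)] stepB[OF ij(1)]])
    qed
    have b00: "B$$(i0,j0) = 0"
    proof -
      have h: "B$$(i0,j0) * B$$(i1,j1) = B$$(i0,j1) * B$$(i1,j0)"
        using minor_zero[OF BC r1, of i0 i1 j0 j1] i0 i1 j0 j1 by simp
      show ?thesis by (rule alg_D[OF h stepC[OF i1(1) j1(1)] stepA[OF j1(1)] stepB[OF i1(1)]]) (use i0 j0 i1 j1 in simp_all)
    qed
    have "B$$(i,j) = outer v w $$ (i,j)" if "i < n" "j < m" for i j
      using stepC[OF that] b00 i0 j0 that by simp
    then show ?thesis unfolding B_def[symmetric] by (intro eq_matI) auto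
  qed
qed

lemma main_gen:
  fixes p :: "complex mat \<Rightarrow> complex mat \<Rightarrow> complex mat"
  assumes bil: "cbilinear_on n m p"
   and idl: "\<forall>A\<in>carrier_mat n m. p (outer e f) A = A \<and> p A (outer e f) = A"
   and rk: "\<forall>A\<in>carrier_mat n m. \<forall>B\<in>carrier_mat n m. crank n A = 1 \<longrightarrow> crank n B = 1 \<longrightarrow> crank n (p A B) \<le> 1"
   and e: "e \<in> carrier_vec n" and f: "f \<in> carrier_vec m"
   and i0: "i0 < n" "e$i0 \<noteq> 0" and j0: "j0 < m" "f$j0 \<noteq> 0"
   and v: "v \<in> carrier_vec n" and w: "w \<in> carrier_vec m"
  shows "p (outer v f) (outer e w) = outer v w"
proof -
  have addl: "\<And>A B C. A \<in> carrier_mat n m \<Longrightarrow> B \<in> carrier_mat n m \<Longrightarrow> C \<in> carrier_mat n m \<Longrightarrow> p (A + B) C = p A C + p B C"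
    using bil unfolding cbilinear_on_def by blast
  have addr: "\<And>A B C. A \<in> carrier_mat n m \<Longrightarrow> B \<in> carrier_mat n m \<Longrightarrow> C \<in> carrier_mat n m \<Longrightarrow> p A (B + C) = p A B + p A C"
    using bil unfolding cbilinear_on_def by blast
  have sml: "\<And>A B c. A \<in> carrier_mat n m \<Longrightarrow> B \<in> carrier_mat n m \<Longrightarrow> p (c \<cdot>\<^sub>m A) B = c \<cdot>\<^sub>m p A B"
    using bil unfolding cbilinear_on_def by blast
  have smr: "\<And>A B c. A \<in> carrier_mat n m \<Longrightarrow> B \<in> carrier_mat n m \<Longrightarrow> p A (c \<cdot>\<^sub>m B) = c \<cdot>\<^sub>m p A B"
    using bil unfolding cbilinear_on_def by blast
  have I: "p (outer e f) A = A" "p A (outer e f) = A" if "A \<in> carrier_mat n m" for A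
    using idl that by auto
  define a where "a = v$i0 / e$i0"
  define b where "b = w$j0 / f$j0"
  define v' where "v' = v + (-a) \<cdot>\<^sub>v e"
  define w' where "w' = w + (-b) \<cdot>\<^sub>v f"
  have v'c: "v' \<in> carrier_vec n" and w'c: "w' \<in> carrier_vec m" unfolding v'_def w'_def using v w e f by auto
  have v'0: "v'$i0 = 0" unfolding v'_def a_def using v e i0 by simp
  have w'0: "w'$j0 = 0" unfolding w'_def b_def using w f j0 by simp
  have vd: "v = v' + a \<cdot>\<^sub>v e" unfolding v'_def using v e by (intro eq_vecI) auto
  have wd: "w = w' + b \<cdot>\<^sub>v f" unfolding w'_def using w f by (intro eq_vecI) auto
  have c: "p (outer v' f) (outer e w') = outer v' w'"
    by (rule core[OF bil idl rk e f i0 j0 v'c v'0 w'c w'0])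
  have "p (outer v f) (outer e w) = outer v' w' + a \<cdot>\<^sub>m outer e w' + cnj b \<cdot>\<^sub>m (outer v' f + a \<cdot>\<^sub>m outer e f)"
    unfolding vd wd using e f v'c w'c
    by (simp add: outer_add_left outer_smult_left outer_add_right outer_smult_right addl addr sml smr I c)
  also have "\<dots> = outer v w"
    unfolding vd wd using e f v'c w'c
    by (intro eq_matI) (auto simp: algebra_simps)
  finally show ?thesis .
qed

lemma swap_bil: "cbilinear_on n m p \<Longrightarrow> cbilinear_on n m (\<lambda>A B. p B A)"
  unfolding cbilinear_on_def by blast

theorem mainTheorem1:
  fixes n m :: nat and p :: "complex mat \<Rightarrow> complex mat \<Rightarrow> complex mat"
    and e f v w :: "complex vec"
  assumes "ropp n m p"
    and "e \<in> carrier_vec n" and "f \<in> carrier_vec m"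
    and "\<forall>A \<in> carrier_mat n m. p (outer e f) A = A \<and> p A (outer e f) = A"
    and "v \<in> carrier_vec n" and "w \<in> carrier_vec m"
  shows "p (outer v f) (outer e w) = outer v w \<and> p (outer e w) (outer v f) = outer v w"
proof -
  note e = assms(2) and f = assms(3) and idl = assms(4) and v = assms(5) and w = assms(6)
  have bil: "cbilinear_on n m p" using assms(1) unfolding ropp_def by blast
  have rk: "\<forall>A\<in>carrier_mat n m. \<forall>B\<in>carrier_mat n m. crank n A = 1 \<longrightarrow> crank n B = 1 \<longrightarrow> crank n (p A B) \<le> 1"
    using assms(1) unfolding ropp_def by blast
  obtain E where EC: "E \<in> carrier_mat n m" and Er: "crank n E = 1"
    and Ei: "\<forall>A \<in> carrier_mat n m. p E A = A \<and> p A E = A"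
    using assms(1) unfolding ropp_def by blast
  have ef: "outer e f \<in> carrier_mat n m" using e f by simp
  have "E = outer e f" using Ei ef idl EC by metis
  with Er have r1: "crank n (outer e f) = 1" by simp
  have z0: "crank n (0\<^sub>m n m :: complex mat) = 0" unfolding crank_def by (rule vec_space.rank_0I)
  have ex: "\<exists>i0<n. e$i0 \<noteq> 0" "\<exists>j0<m. f$j0 \<noteq> 0"
  proof -
    show "\<exists>i0<n. e$i0 \<noteq> 0"
    proof (rule ccontr)
      assume "\<not> ?thesis"
      then have "outer e f = 0\<^sub>m n m" using e f by (intro eq_matI) auto
      then show False using r1 z0 by simp
    qed
    show "\<exists>j0<m. f$j0 \<noteq> 0"
    proof (rule ccontr)
      assume "\<not> ?thesis"
      then have "outer e f = 0\<^sub>m n m" using e f by (intro eq_matI) auto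
      then show False using r1 z0 by simp
    qed
  qed
  then obtain i0 j0 where i0: "i0 < n" "e$i0 \<noteq> 0" and j0: "j0 < m" "f$j0 \<noteq> 0" by blast
  have 1: "p (outer v f) (outer e w) = outer v w"
    by (rule main_gen[OF bil idl rk e f i0 j0 v w])
  have 2: "(\<lambda>A B. p B A) (outer v f) (outer e w) = outer v w"
    by (rule main_gen[OF swap_bil[OF bil] _ _ e f i0 j0 v w]) (use idl rk in auto)
  show ?thesis using 1 2 by simp
qed


end
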